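(* Let $n$ and $r\ge 2$ be integers and let $q\ge r$ be a prime power. Suppose there exists a Steiner system $S(2,r,n)$, i.e. a collection $\mathcal{B}$ of $r$-element subsets of $I_n=\{1,\dots,n\}$ such that every 2-element subset of $I_n$ is contained in exactly one block of $\mathcal{B}$. Then there exists a linear $(n,k,d)=(n,n-2,n-1)$ exact-repair regenerating code over $\mathbb{F}_q$ with $$\alpha=\frac{n-1}{r-1},\qquad \beta=1,\qquad M=\frac{n(n-1)}{r}-1,$$ which has uncoded repair: when a node fails, each of the $n-1$ remaining nodes sends exactly one of its stored symbols, unchanged, and the lost node's content is computed from these symbols.
   Context: A linear $(n,k,d)$ exact-repair regenerating code over $\mathbb{F}_q$ with parameters $(\alpha,\beta,M)$ stores on each of $n$ nodes $\alpha$ symbols of $\mathbb{F}_q$, each a linear function of a message in $\mathbb{F}_q^M$, such that (i) the message can be recovered from the contents of any $k$ nodes, and (ii) for any node $j$ and any set $A$ of $d$ other nodes, each node in $A$ sends $\beta$ symbols computed from its own content, and from the $d\beta$ received symbols the exact content of node $j$ can be reconstructed. *)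

theory Defs
  imports Main "HOL-Library.FuncSet"
begin

definition steiner_system_2 :: "nat \<Rightarrow> nat \<Rightarrow> nat set set \<Rightarrow> bool" where
  "steiner_system_2 r n B \<longleftrightarrow>
     (\<forall>b\<in>B. b \<subseteq> {1..n} \<and> card b = r) \<and>
     (\<forall>P. P \<subseteq> {1..n} \<and> card P = 2 \<longrightarrow> (\<exists>!b. b \<in> B \<and> P \<subseteq> b))"

definition node_content ::
  "(nat \<Rightarrow> nat \<Rightarrow> nat \<Rightarrow> 'a::comm_semiring_1) \<Rightarrow> nat \<Rightarrow> 'a list \<Rightarrow> nat \<Rightarrow> 'a list" where
  "node_content G \<alpha> m j = map (\<lambda>i. \<Sum>l<length m. G j i l * m ! l) [0..<\<alpha>]"

definition regenerating_code ::
  "(nat \<Rightarrow> nat \<Rightarrow> nat \<Rightarrow> 'a::field) \<Rightarrow> nat \<Rightarrow> nat \<Rightarrow> nat \<Rightarrow> nat \<Rightarrow> nat \<Rightarrow> nat \<Rightarrow> bool" where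
  "regenerating_code G n k d \<alpha> \<beta> M \<longleftrightarrow>
     (\<forall>K. K \<subseteq> {1..n} \<and> card K = k \<longrightarrow>
        (\<exists>dec :: (nat \<Rightarrow> 'a list) \<Rightarrow> 'a list.
           \<forall>m. length m = M \<longrightarrow> dec (\<lambda>j\<in>K. node_content G \<alpha> m j) = m)) \<and>
     (\<forall>j\<in>{1..n}. \<forall>A. A \<subseteq> {1..n} - {j} \<and> card A = d \<longrightarrow>
        (\<exists>(S :: nat \<Rightarrow> nat \<Rightarrow> nat \<Rightarrow> 'a) (rec :: (nat \<Rightarrow> 'a list) \<Rightarrow> 'a list).
           \<forall>m. length m = M \<longrightarrow>
             rec (\<lambda>h\<in>A. map (\<lambda>t. \<Sum>i<\<alpha>. S h t i * node_content G \<alpha> m h ! i) [0..<\<beta>])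
               = node_content G \<alpha> m j))"

definition uncoded_repair ::
  "(nat \<Rightarrow> nat \<Rightarrow> nat \<Rightarrow> 'a::field) \<Rightarrow> nat \<Rightarrow> nat \<Rightarrow> nat \<Rightarrow> bool" where
  "uncoded_repair G n \<alpha> M \<longleftrightarrow>
     (\<forall>j\<in>{1..n}. \<exists>(s :: nat \<Rightarrow> nat) (rec :: (nat \<Rightarrow> 'a) \<Rightarrow> 'a list).
        (\<forall>h\<in>{1..n} - {j}. s h < \<alpha>) \<and>
        (\<forall>m. length m = M \<longrightarrow>
           rec (\<lambda>h\<in>{1..n} - {j}. node_content G \<alpha> m h ! s h) = node_content G \<alpha> m j))"

end

theory Submission imports Defs begin

locale stc =
  fixes r n :: nat and B :: "nat set set"
  assumes r2: "r \<ge> 2" and ss: "steiner_system_2 r n B"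
begin

lemma blk: "\<beta> \<in> B \<Longrightarrow> \<beta> \<subseteq> {1..n} \<and> card \<beta> = r"
  using ss unfolding steiner_system_2_def by blast

lemma blk_fin: "\<beta> \<in> B \<Longrightarrow> finite \<beta>"
  using blk finite_subset by blast

lemma blk_ne: "\<beta> \<in> B \<Longrightarrow> \<beta> \<noteq> {}"
  using blk r2 by fastforce

lemma B_fin: "finite B"
proof -
  have "B \<subseteq> Pow {1..n}" using blk by blast
  then show ?thesis using finite_subset by blast
qed

lemma pair_card: "p \<noteq> q \<Longrightarrow> card {p,q} = 2" by simp

lemma uniq:
  assumes "\<beta> \<in> B" "\<beta>' \<in> B" "p \<in> \<beta>" "q \<in> \<beta>" "p \<in> \<beta>'" "q \<in> \<beta>'" "p \<noteq> q"
  shows "\<beta> = \<beta>'"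
proof -
  have "{p,q} \<subseteq> {1..n}" using assms blk by blast
  moreover have "card {p,q} = 2" using assms(7) by simp
  moreover have "\<forall>P. P \<subseteq> {1..n} \<and> card P = 2 \<longrightarrow> (\<exists>!b. b \<in> B \<and> P \<subseteq> b)" using ss unfolding steiner_system_2_def by blast
  ultimately have "\<exists>!b. b \<in> B \<and> {p,q} \<subseteq> b" by blast
  then show ?thesis using assms by blast
qed

lemma exblk:
  assumes "p \<in> {1..n}" "q \<in> {1..n}" "p \<noteq> q"
  shows "\<exists>\<beta>\<in>B. p \<in> \<beta> \<and> q \<in> \<beta>"
proof -
  have "{p,q} \<subseteq> {1..n}" using assms by blast
  moreover have "card {p,q} = 2" using assms(3) by simp
  moreover have "\<forall>P. P \<subseteq> {1..n} \<and> card P = 2 \<longrightarrow> (\<exists>!b. b \<in> B \<and> P \<subseteq> b)" using ss unfolding steiner_system_2_def by blast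
  ultimately have "\<exists>!b. b \<in> B \<and> {p,q} \<subseteq> b" by blast
  then show ?thesis by blast
qed

definition Bp :: "nat \<Rightarrow> nat set set" where "Bp p = {\<beta>\<in>B. p \<in> \<beta>}"

lemma Bp_fin: "finite (Bp p)" using B_fin unfolding Bp_def by auto

lemma card_Bp:
  assumes p: "p \<in> {1..n}"
  shows "card (Bp p) * (r - 1) = n - 1"
proof -
  have U: "{1..n} - {p} = (\<Union>\<beta>\<in>Bp p. \<beta> - {p})"
  proof
    show "{1..n} - {p} \<subseteq> (\<Union>\<beta>\<in>Bp p. \<beta> - {p})"
    proof
      fix q assume "q \<in> {1..n} - {p}"
      then obtain \<beta> where "\<beta>\<in>B" "p\<in>\<beta>" "q\<in>\<beta>" using exblk[of p q] p by auto
      then show "q \<in> (\<Union>\<beta>\<in>Bp p. \<beta> - {p})" using \<open>q \<in> {1..n} - {p}\<close> unfolding Bp_def by blast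
    qed
    show "(\<Union>\<beta>\<in>Bp p. \<beta> - {p}) \<subseteq> {1..n} - {p}" using blk unfolding Bp_def by blast
  qed
  have "card (\<Union>\<beta>\<in>Bp p. \<beta> - {p}) = (\<Sum>\<beta>\<in>Bp p. card (\<beta> - {p}))"
  proof (rule card_UN_disjoint)
    show "finite (Bp p)" by (rule Bp_fin)
    show "\<forall>i\<in>Bp p. finite (i - {p})" using blk_fin unfolding Bp_def by blast
    show "\<forall>i\<in>Bp p. \<forall>j\<in>Bp p. i \<noteq> j \<longrightarrow> (i - {p}) \<inter> (j - {p}) = {}"
      using uniq unfolding Bp_def by blast
  qed
  also have "\<dots> = (\<Sum>\<beta>\<in>Bp p. r - 1)"
    by (rule sum.cong) (auto simp: Bp_def blk blk_fin)
  moreover have "card ({1..n} - {p}) = n - 1" using p by simp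
  ultimately show ?thesis using U by simp
qed

definition alpha :: nat where "alpha = (n - 1) div (r - 1)"

lemma card_Bp_alpha: "p \<in> {1..n} \<Longrightarrow> card (Bp p) = alpha"
proof -
  assume p: "p \<in> {1..n}"
  have "alpha = card (Bp p) * (r - 1) div (r - 1)" using card_Bp[OF p] unfolding alpha_def by simp
  also have "\<dots> = card (Bp p)" using r2 by (intro nonzero_mult_div_cancel_right) simp
  finally show ?thesis by simp
qed

lemma card_Bp_sum: "card (Bp p) = (\<Sum>\<beta>\<in>B. if p \<in> \<beta> then 1 else 0)"
proof -
  have "B \<inter> {\<beta>. p \<in> \<beta>} = Bp p" unfolding Bp_def by blast
  then show ?thesis by (simp add: B_fin sum.If_cases)
qed

lemma double_count: "(\<Sum>p\<in>{1..n}. card (Bp p)) = card B * r"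
proof -
  have "(\<Sum>p\<in>{1..n}. card (Bp p)) = (\<Sum>p\<in>{1..n}. \<Sum>\<beta>\<in>B. if p \<in> \<beta> then 1 else 0)"
    using card_Bp_sum by simp
  also have "\<dots> = (\<Sum>\<beta>\<in>B. \<Sum>p\<in>{1..n}. if p \<in> \<beta> then 1 else 0)" by (rule sum.swap)
  also have "\<dots> = (\<Sum>\<beta>\<in>B. card \<beta>)"
  proof (rule sum.cong)
    fix \<beta> assume "\<beta> \<in> B"
    then have "{1..n} \<inter> \<beta> = \<beta>" using blk by blast
    then show "(\<Sum>p\<in>{1..n}. if p \<in> \<beta> then 1 else 0) = card \<beta>"
      by (simp add: sum.If_cases)
  qed simp
  also have "\<dots> = card B * r" using blk by simp
  finally show ?thesis .
qed

lemma Mcount: "n * (n - 1) div r = card B * (r - 1)"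
proof -
  have "n * alpha = card B * r" using double_count card_Bp_alpha by simp
  moreover have "n - 1 = alpha * (r - 1)"
  proof (cases "n = 0")
    case True then show ?thesis unfolding alpha_def by simp
  next
    case False then have "1 \<in> {1..n}" by simp
    then show ?thesis using card_Bp[of 1] card_Bp_alpha[of 1] by simp
  qed
  ultimately have "n * (n - 1) = card B * (r - 1) * r" by (metis mult.assoc mult.commute)
  then show ?thesis using r2 by simp
qed


end
context stc begin
definition rk :: "nat set \<Rightarrow> nat \<Rightarrow> nat" where "rk \<beta> p = card {q\<in>\<beta>. q < p}"

lemma rk_less: "finite \<beta> \<Longrightarrow> p \<in> \<beta> \<Longrightarrow> rk \<beta> p < card \<beta>"
proof -
  assume a: "finite \<beta>" "p \<in> \<beta>"
  have "{q\<in>\<beta>. q < p} \<subset> \<beta>" using a by auto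
  then show ?thesis unfolding rk_def using a(1) by (intro psubset_card_mono)
qed

lemma rk_mono: "finite \<beta> \<Longrightarrow> p \<in> \<beta> \<Longrightarrow> p' \<in> \<beta> \<Longrightarrow> p < p' \<Longrightarrow> rk \<beta> p < rk \<beta> p'"
proof -
  assume a: "finite \<beta>" "p \<in> \<beta>" "p' \<in> \<beta>" "p < p'"
  have "{q\<in>\<beta>. q < p} \<subset> {q\<in>\<beta>. q < p'}" using a by auto
  then show ?thesis unfolding rk_def using a(1) by (intro psubset_card_mono) auto
qed

lemma rk_inj: "finite \<beta> \<Longrightarrow> p \<in> \<beta> \<Longrightarrow> p' \<in> \<beta> \<Longrightarrow> p \<noteq> p' \<Longrightarrow> rk \<beta> p \<noteq> rk \<beta> p'"
  using rk_mono[of \<beta> p p'] rk_mono[of \<beta> p' p] by (cases "p < p'") auto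

lemma rk_Min: "finite \<beta> \<Longrightarrow> \<beta> \<noteq> {} \<Longrightarrow> rk \<beta> (Min \<beta>) = 0"
  unfolding rk_def by (auto simp: card_eq_0_iff)

definition S :: "(nat set \<times> nat) set" where "S = Sigma B (\<lambda>\<beta>. \<beta> - {Min \<beta>})"
definition q0 :: "nat set \<times> nat" where "q0 = (SOME q. q \<in> S)"
definition F :: "(nat set \<times> nat) set" where "F = S - {q0}"
definition Mm :: nat where "Mm = n * (n - 1) div r - 1"

lemma S_fin: "finite S" unfolding S_def using B_fin blk_fin by auto
lemma F_fin: "finite F" unfolding F_def using S_fin by auto

lemma card_S: "card S = card B * (r - 1)"
proof -
  have "card S = (\<Sum>\<beta>\<in>B. card (\<beta> - {Min \<beta>}))"
    unfolding S_def by (rule card_SigmaI) (auto simp: B_fin blk_fin)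
  also have "\<dots> = (\<Sum>\<beta>\<in>B. r - 1)"
    by (rule sum.cong) (auto simp: blk blk_fin blk_ne)
  finally show ?thesis by simp
qed

lemma card_F: "card F = Mm"
proof (cases "S = {}")
  case True then show ?thesis using card_S Mcount r2 unfolding F_def Mm_def by simp
next
  case False
  then have "q0 \<in> S" unfolding q0_def by (simp add: some_in_eq)
  then show ?thesis using card_S Mcount S_fin unfolding F_def Mm_def by simp
qed

definition ix :: "nat set \<times> nat \<Rightarrow> nat" where "ix = (SOME f. bij_betw f F {0..<card F})"

lemma ix_bij: "bij_betw ix F {0..<Mm}"
  using someI_ex[OF ex_bij_betw_finite_nat[OF F_fin]] card_F unfolding ix_def by simp

definition en :: "nat \<Rightarrow> nat \<Rightarrow> nat set" where
  "en p = (SOME f. bij_betw f {0..<card (Bp p)} (Bp p))"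

lemma en_bij: "p \<in> {1..n} \<Longrightarrow> bij_betw (en p) {0..<alpha} (Bp p)"
  using someI_ex[OF ex_bij_betw_nat_finite[OF Bp_fin]] card_Bp_alpha unfolding en_def by metis

end

locale stc2 = stc +
  fixes e :: "nat \<Rightarrow> 'a::{field,finite}"
  assumes e_inj: "inj_on e {0..<r}" and e0: "e 0 = 0"
begin

definition c :: "nat set \<Rightarrow> nat \<Rightarrow> 'a" where "c \<beta> p = e (rk \<beta> p)"

lemma c_Min: "\<beta> \<in> B \<Longrightarrow> c \<beta> (Min \<beta>) = 0"
  unfolding c_def using rk_Min blk_fin blk_ne e0 by simp

lemma c_inj: "\<beta> \<in> B \<Longrightarrow> p \<in> \<beta> \<Longrightarrow> p' \<in> \<beta> \<Longrightarrow> p \<noteq> p' \<Longrightarrow> c \<beta> p \<noteq> c \<beta> p'"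
proof -
  assume a: "\<beta> \<in> B" "p \<in> \<beta>" "p' \<in> \<beta>" "p \<noteq> p'"
  have fin: "finite \<beta>" using a blk_fin by simp
  have ne: "rk \<beta> p \<noteq> rk \<beta> p'" using rk_inj[OF fin a(2,3,4)] .
  have "rk \<beta> p < r" "rk \<beta> p' < r" using rk_less[OF fin a(2)] rk_less[OF fin a(3)] blk[OF a(1)] by auto
  then have "e (rk \<beta> p) \<noteq> e (rk \<beta> p')" using inj_on_contraD[OF e_inj ne] by simp
  then show ?thesis unfolding c_def .
qed

lemma zero_lemma:
  fixes d :: "nat set \<Rightarrow> nat \<Rightarrow> 'a"
  assumes bs: "\<forall>\<beta>\<in>B. (\<Sum>p\<in>\<beta>. d \<beta> p) = 0"
    and gs: "(\<Sum>\<beta>\<in>B. \<Sum>p\<in>\<beta>. c \<beta> p * d \<beta> p) = 0"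
    and ij: "i \<noteq> j"
    and z: "\<forall>\<beta>\<in>B. \<forall>p\<in>\<beta>. p \<notin> {i,j} \<longrightarrow> d \<beta> p = 0"
  shows "\<forall>\<beta>\<in>B. \<forall>p\<in>\<beta>. d \<beta> p = 0"
proof -
  have z': "d \<beta> p = 0" if "\<beta> \<in> B" "p \<in> \<beta>" "p \<noteq> i" "p \<noteq> j" for \<beta> p
    using z that by simp
  have A: "d \<beta> p = 0" if b: "\<beta> \<in> B" "p \<in> \<beta>" "\<not> (i \<in> \<beta> \<and> j \<in> \<beta>)" for \<beta> p
  proof (cases "p = i \<or> p = j")
    case False
    then show ?thesis using z' b by simp
  next
    case True
    have fin: "finite \<beta>" using b(1) blk_fin by simp
    have r1: "(\<Sum>q\<in>\<beta>. d \<beta> q) = d \<beta> p + (\<Sum>q\<in>\<beta>-{p}. d \<beta> q)"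
      by (rule sum.remove[OF fin b(2)])
    have r2: "(\<Sum>q\<in>\<beta>-{p}. d \<beta> q) = 0"
    proof (rule sum.neutral, rule ballI)
      fix q assume q: "q \<in> \<beta> - {p}"
      then have "q \<noteq> i" "q \<noteq> j" using True b(2,3) by auto
      then show "d \<beta> q = 0" using z' b(1) q by simp
    qed
    have "(\<Sum>q\<in>\<beta>. d \<beta> q) = 0" using bs b(1) by simp
    then show ?thesis using r1 r2 by simp
  qed
  have Bb: "d \<beta> i = 0 \<and> d \<beta> j = 0" if b: "\<beta> \<in> B" "i \<in> \<beta>" "j \<in> \<beta>" for \<beta>
  proof -
    have fin: "finite \<beta>" using b(1) blk_fin by simp
    have sub: "{i,j} \<subseteq> \<beta>" using b by simp
    have zz: "\<forall>q\<in>\<beta> - {i,j}. d \<beta> q = 0" using z' b(1) by simp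
    have zz2: "\<forall>q\<in>\<beta> - {i,j}. c \<beta> q * d \<beta> q = 0" using zz by simp
    have "(\<Sum>q\<in>\<beta>. d \<beta> q) = (\<Sum>q\<in>{i,j}. d \<beta> q)"
      by (rule sum.mono_neutral_right[OF fin sub zz])
    then have s1: "d \<beta> i + d \<beta> j = 0" using bs b(1) ij by simp
    have outer: "\<forall>x\<in>B - {\<beta>}. (\<Sum>p\<in>x. c x p * d x p) = 0"
    proof
      fix x assume x: "x \<in> B - {\<beta>}"
      have nb: "\<not> (i \<in> x \<and> j \<in> x)"
      proof
        assume "i \<in> x \<and> j \<in> x"
        then have "\<beta> = x" using uniq[of \<beta> x i j] x b ij by simp
        then show False using x by simp
      qed
      show "(\<Sum>p\<in>x. c x p * d x p) = 0"
      proof (rule sum.neutral, rule ballI)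
        fix p assume "p \<in> x"
        then have "d x p = 0" using A[of x p] x nb by simp
        then show "c x p * d x p = 0" by simp
      qed
    qed
    have "(\<Sum>\<beta>'\<in>B. \<Sum>p\<in>\<beta>'. c \<beta>' p * d \<beta>' p) = (\<Sum>\<beta>'\<in>{\<beta>}. \<Sum>p\<in>\<beta>'. c \<beta>' p * d \<beta>' p)"
      by (rule sum.mono_neutral_right[OF B_fin _ outer]) (simp add: b(1))
    also have "\<dots> = (\<Sum>p\<in>\<beta>. c \<beta> p * d \<beta> p)" by simp
    also have "\<dots> = (\<Sum>p\<in>{i,j}. c \<beta> p * d \<beta> p)"
      by (rule sum.mono_neutral_right[OF fin sub zz2])
    also have "\<dots> = c \<beta> i * d \<beta> i + c \<beta> j * d \<beta> j" using ij by simp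
    finally have s2: "c \<beta> i * d \<beta> i + c \<beta> j * d \<beta> j = 0" using gs by simp
    have cne: "c \<beta> i - c \<beta> j \<noteq> 0" using c_inj[OF b(1,2,3) ij] by simp
    have dj: "d \<beta> j = - d \<beta> i" using s1 by (simp add: eq_neg_iff_add_eq_0 add.commute)
    have "(c \<beta> i - c \<beta> j) * d \<beta> i = c \<beta> i * d \<beta> i + c \<beta> j * d \<beta> j"
      using dj by (simp add: algebra_simps)
    then have "(c \<beta> i - c \<beta> j) * d \<beta> i = 0" using s2 by simp
    then have "d \<beta> i = 0" using cne by simp
    then show ?thesis using dj by simp
  qed
  show ?thesis
  proof (intro ballI)
    fix \<beta> p assume bp: "\<beta> \<in> B" "p \<in> \<beta>"
    show "d \<beta> p = 0"
    proof (cases "i \<in> \<beta> \<and> j \<in> \<beta>")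
      case True
      then show ?thesis using Bb[of \<beta>] bp z' by (cases "p = i \<or> p = j") auto
    next
      case False
      then show ?thesis using A bp by simp
    qed
  qed
qed

definition c0 :: 'a where "c0 = c (fst q0) (snd q0)"

definition Y :: "nat set \<Rightarrow> nat \<Rightarrow> nat \<Rightarrow> 'a" where
  "Y \<beta> p l = (if (\<beta>,p) \<in> F then (if l = ix (\<beta>,p) then 1 else 0)
     else if (\<beta>,p) = q0 then - (1 / c0) * (\<Sum>q\<in>F. c (fst q) (snd q) * (if l = ix q then 1 else 0))
     else 0)"

definition X :: "nat set \<Rightarrow> nat \<Rightarrow> nat \<Rightarrow> 'a" where
  "X \<beta> p l = (if p = Min \<beta> then - (\<Sum>q\<in>\<beta>-{p}. Y \<beta> q l) else Y \<beta> p l)"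

definition G :: "nat \<Rightarrow> nat \<Rightarrow> nat \<Rightarrow> 'a" where "G p s l = X (en p s) p l"

definition yv :: "'a list \<Rightarrow> nat set \<Rightarrow> nat \<Rightarrow> 'a" where
  "yv m \<beta> p = (\<Sum>l<length m. Y \<beta> p l * m ! l)"
definition xv :: "'a list \<Rightarrow> nat set \<Rightarrow> nat \<Rightarrow> 'a" where
  "xv m \<beta> p = (\<Sum>l<length m. X \<beta> p l * m ! l)"

lemma xv_eq: "xv m \<beta> p = (if p = Min \<beta> then - (\<Sum>q\<in>\<beta>-{p}. yv m \<beta> q) else yv m \<beta> p)"
proof (cases "p = Min \<beta>")
  case True
  have "xv m \<beta> p = (\<Sum>l<length m. - (\<Sum>q\<in>\<beta>-{p}. Y \<beta> q l * m ! l))"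
    unfolding xv_def X_def using True by (simp add: sum_distrib_right)
  also have "\<dots> = - (\<Sum>q\<in>\<beta>-{p}. yv m \<beta> q)"
    unfolding yv_def sum_negf by (subst sum.swap) simp
  finally show ?thesis using True by simp
next
  case False then show ?thesis unfolding xv_def yv_def X_def by simp
qed

lemma yv_F: "q \<in> F \<Longrightarrow> length m = Mm \<Longrightarrow> yv m (fst q) (snd q) = m ! ix q"
proof -
  assume q: "q \<in> F" and lm: "length m = Mm"
  have lt: "ix q < length m" using ix_bij q lm by (auto dest: bij_betw_apply)
  have "yv m (fst q) (snd q) = (\<Sum>l<length m. (if l = ix q then m ! l else 0))"
    unfolding yv_def Y_def using q by (intro sum.cong) auto
  also have "\<dots> = m ! ix q" using lt by (simp add: sum.delta)
  finally show ?thesis .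
qed

lemma q0_notin: "q0 \<notin> F" unfolding F_def by simp

lemma yv_q0: "yv m (fst q0) (snd q0) = - (1 / c0) * (\<Sum>q\<in>F. c (fst q) (snd q) * yv m (fst q) (snd q))"
proof -
  have e1: "yv m (fst q0) (snd q0) = (\<Sum>l<length m. - (1 / c0) * (\<Sum>q\<in>F. c (fst q) (snd q) * ((if l = ix q then 1 else 0) * m ! l)))"
    unfolding yv_def Y_def using q0_notin by (simp add: sum_distrib_right mult.assoc)
  have e2: "(\<Sum>l<length m. - (1 / c0) * (\<Sum>q\<in>F. c (fst q) (snd q) * ((if l = ix q then 1 else 0) * m ! l)))
     = - (1 / c0) * (\<Sum>l<length m. \<Sum>q\<in>F. c (fst q) (snd q) * ((if l = ix q then 1 else 0) * m ! l))"
    by (simp only: sum_distrib_left)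
  have e3: "(\<Sum>l<length m. \<Sum>q\<in>F. c (fst q) (snd q) * ((if l = ix q then 1 else 0) * m ! l))
     = (\<Sum>q\<in>F. \<Sum>l<length m. c (fst q) (snd q) * ((if l = ix q then 1 else 0) * m ! l))"
    by (rule sum.swap)
  have e4: "(\<Sum>q\<in>F. \<Sum>l<length m. c (fst q) (snd q) * ((if l = ix q then 1 else 0) * m ! l))
     = (\<Sum>q\<in>F. c (fst q) (snd q) * yv m (fst q) (snd q))"
  proof (rule sum.cong[OF refl])
    fix q assume q: "q \<in> F"
    have "yv m (fst q) (snd q) = (\<Sum>l<length m. (if l = ix q then 1 else 0) * m ! l)"
      unfolding yv_def Y_def using q by simp
    then show "(\<Sum>l<length m. c (fst q) (snd q) * ((if l = ix q then 1 else 0) * m ! l)) = c (fst q) (snd q) * yv m (fst q) (snd q)"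
      by (simp only: sum_distrib_left)
  qed
  show ?thesis using e1 e2 e3 e4 by simp
qed

lemma block_sum: "\<beta> \<in> B \<Longrightarrow> (\<Sum>p\<in>\<beta>. xv m \<beta> p) = 0"
proof -
  assume b: "\<beta> \<in> B"
  have mi: "Min \<beta> \<in> \<beta>" using b blk_fin blk_ne by simp
  have "(\<Sum>p\<in>\<beta>. xv m \<beta> p) = xv m \<beta> (Min \<beta>) + (\<Sum>p\<in>\<beta>-{Min \<beta>}. xv m \<beta> p)"
    by (rule sum.remove[OF blk_fin[OF b] mi])
  also have "(\<Sum>p\<in>\<beta>-{Min \<beta>}. xv m \<beta> p) = (\<Sum>p\<in>\<beta>-{Min \<beta>}. yv m \<beta> p)"
    by (intro sum.cong) (auto simp: xv_eq)
  finally show ?thesis by (simp add: xv_eq)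
qed

lemma c0_ne: "S \<noteq> {} \<Longrightarrow> c0 \<noteq> 0"
proof -
  assume "S \<noteq> {}"
  then have "q0 \<in> S" unfolding q0_def by (simp add: some_in_eq)
  then have "fst q0 \<in> B" "snd q0 \<in> fst q0" "snd q0 \<noteq> Min (fst q0)" unfolding S_def by auto
  moreover have "Min (fst q0) \<in> fst q0" using calculation blk_fin blk_ne by simp
  ultimately have "c (fst q0) (snd q0) \<noteq> c (fst q0) (Min (fst q0))" using c_inj by blast
  then show ?thesis unfolding c0_def using c_Min \<open>fst q0 \<in> B\<close> by simp
qed

lemma global_sum: "(\<Sum>\<beta>\<in>B. \<Sum>p\<in>\<beta>. c \<beta> p * xv m \<beta> p) = 0"
proof (cases "S = {}")
  case True
  have "B = {}"
  proof (rule ccontr)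
    assume "B \<noteq> {}"
    then obtain \<beta> where b: "\<beta> \<in> B" by auto
    have "card (\<beta> - {Min \<beta>}) = r - 1" using b blk blk_fin blk_ne by simp
    moreover have "r - 1 \<noteq> 0" using r2 by simp
    ultimately have "card (\<beta> - {Min \<beta>}) \<noteq> 0" by simp
    then have "\<beta> - {Min \<beta>} \<noteq> {}" by (metis card.empty)
    then show False using True b unfolding S_def by auto
  qed
  then show ?thesis by simp
next
  case False
  have inner: "(\<Sum>p\<in>\<beta>. c \<beta> p * xv m \<beta> p) = (\<Sum>p\<in>\<beta>-{Min \<beta>}. c \<beta> p * yv m \<beta> p)" if b: "\<beta> \<in> B" for \<beta>
  proof -
    have mi: "Min \<beta> \<in> \<beta>" using b blk_fin blk_ne by simp
    have "(\<Sum>p\<in>\<beta>. c \<beta> p * xv m \<beta> p) = c \<beta> (Min \<beta>) * xv m \<beta> (Min \<beta>) + (\<Sum>p\<in>\<beta>-{Min \<beta>}. c \<beta> p * xv m \<beta> p)"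
      by (rule sum.remove[OF blk_fin[OF b] mi])
    also have "(\<Sum>p\<in>\<beta>-{Min \<beta>}. c \<beta> p * xv m \<beta> p) = (\<Sum>p\<in>\<beta>-{Min \<beta>}. c \<beta> p * yv m \<beta> p)"
      by (intro sum.cong) (auto simp: xv_eq)
    finally show ?thesis using c_Min b by simp
  qed
  have "(\<Sum>\<beta>\<in>B. \<Sum>p\<in>\<beta>. c \<beta> p * xv m \<beta> p) = (\<Sum>\<beta>\<in>B. \<Sum>p\<in>\<beta>-{Min \<beta>}. c \<beta> p * yv m \<beta> p)"
    using inner by simp
  also have "\<dots> = (\<Sum>q\<in>S. c (fst q) (snd q) * yv m (fst q) (snd q))"
    unfolding S_def by (subst sum.Sigma) (auto simp: B_fin blk_fin split_beta)
  also have "S = insert q0 F" using False unfolding F_def q0_def by (auto simp: some_in_eq)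
  also have "(\<Sum>q\<in>insert q0 F. c (fst q) (snd q) * yv m (fst q) (snd q))
      = c0 * yv m (fst q0) (snd q0) + (\<Sum>q\<in>F. c (fst q) (snd q) * yv m (fst q) (snd q))"
    using F_fin q0_notin by (simp add: c0_def)
  also have "\<dots> = 0" using c0_ne[OF False] by (simp add: yv_q0)
  finally show ?thesis .
qed


lemma content: "s < alpha \<Longrightarrow> node_content G alpha m p ! s = xv m (en p s) p"
  unfolding node_content_def G_def xv_def by simp

lemma uncoded: "uncoded_repair G n alpha Mm"
  unfolding uncoded_repair_def
proof (intro ballI)
  fix j assume j: "j \<in> {1..n}"
  define blk2 where "blk2 h = (THE \<beta>. \<beta> \<in> B \<and> h \<in> \<beta> \<and> j \<in> \<beta>)" for h
  have b2: "blk2 h \<in> B \<and> h \<in> blk2 h \<and> j \<in> blk2 h" if h: "h \<in> {1..n} - {j}" for h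
  proof -
    have "\<exists>!\<beta>. \<beta> \<in> B \<and> h \<in> \<beta> \<and> j \<in> \<beta>" using exblk[of h j] uniq[of _ _ h j] h j by auto
    then show ?thesis unfolding blk2_def by (rule theI')
  qed
  have b2eq: "blk2 h = \<beta>" if "\<beta> \<in> B" "h \<in> \<beta>" "j \<in> \<beta>" "h \<noteq> j" for h \<beta>
    unfolding blk2_def using that uniq by (intro the_equality) blast+
  define s where "s h = inv_into {0..<alpha} (en h) (blk2 h)" for h
  have sprop: "s h < alpha \<and> en h (s h) = blk2 h" if h: "h \<in> {1..n} - {j}" for h
  proof -
    have bij: "bij_betw (en h) {0..<alpha} (Bp h)" using en_bij h by simp
    have "blk2 h \<in> en h ` {0..<alpha}" using bij b2[OF h] unfolding bij_betw_def Bp_def by auto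
    then have "s h \<in> {0..<alpha}" "en h (s h) = blk2 h" unfolding s_def
      by (rule inv_into_into, rule f_inv_into_f)
    then show ?thesis by simp
  qed
  define rec where "rec f = map (\<lambda>t. - (\<Sum>h\<in>en j t - {j}. f h)) [0..<alpha]" for f :: "nat \<Rightarrow> 'a"
  show "\<exists>(s :: nat \<Rightarrow> nat) (rec :: (nat \<Rightarrow> 'a) \<Rightarrow> 'a list).
        (\<forall>h\<in>{1..n} - {j}. s h < alpha) \<and>
        (\<forall>m. length m = Mm \<longrightarrow>
           rec (\<lambda>h\<in>{1..n} - {j}. node_content G alpha m h ! s h) = node_content G alpha m j)"
  proof (intro exI conjI allI impI ballI)
    fix h assume "h \<in> {1..n} - {j}" then show "s h < alpha" using sprop by blast
  next
    fix m :: "'a list"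
    show "rec (\<lambda>h\<in>{1..n} - {j}. node_content G alpha m h ! s h) = node_content G alpha m j"
    proof (rule nth_equalityI)
      show "length (rec (\<lambda>h\<in>{1..n} - {j}. node_content G alpha m h ! s h)) = length (node_content G alpha m j)"
        unfolding rec_def node_content_def by simp
    next
      fix t assume "t < length (rec (\<lambda>h\<in>{1..n} - {j}. node_content G alpha m h ! s h))"
      then have t: "t < alpha" unfolding rec_def by simp
      define \<beta> where "\<beta> = en j t"
      have bB: "\<beta> \<in> Bp j" using en_bij[OF j] t unfolding \<beta>_def by (auto dest: bij_betw_apply)
      then have bB': "\<beta> \<in> B" "j \<in> \<beta>" unfolding Bp_def by auto
      have eq: "(\<lambda>h\<in>{1..n} - {j}. node_content G alpha m h ! s h) h = xv m \<beta> h" if h: "h \<in> \<beta> - {j}" for h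
      proof -
        have h2: "h \<in> {1..n} - {j}" using h bB' blk by blast
        have "blk2 h = \<beta>" using b2eq[of \<beta> h] h bB' by auto
        then show ?thesis using h2 sprop[OF h2] content by simp
      qed
      have "rec (\<lambda>h\<in>{1..n} - {j}. node_content G alpha m h ! s h) ! t = - (\<Sum>h\<in>\<beta> - {j}. xv m \<beta> h)"
        unfolding rec_def using t eq by (simp add: \<beta>_def[symmetric])
      also have "\<dots> = xv m \<beta> j"
      proof -
        have "(\<Sum>p\<in>\<beta>. xv m \<beta> p) = xv m \<beta> j + (\<Sum>h\<in>\<beta> - {j}. xv m \<beta> h)"
          by (rule sum.remove[OF blk_fin[OF bB'(1)] bB'(2)])
        then have "xv m \<beta> j + (\<Sum>h\<in>\<beta> - {j}. xv m \<beta> h) = 0" using block_sum[OF bB'(1), of m] by simp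
        then have "xv m \<beta> j = - (\<Sum>h\<in>\<beta> - {j}. xv m \<beta> h)" by (simp only: eq_neg_iff_add_eq_0)
        then show ?thesis by simp
      qed
      also have "\<dots> = node_content G alpha m j ! t" using content[OF t] \<beta>_def by simp
      finally show "rec (\<lambda>h\<in>{1..n} - {j}. node_content G alpha m h ! s h) ! t = node_content G alpha m j ! t" .
    qed
  qed
qed

lemma inj_dc:
  assumes K: "K \<subseteq> {1..n}" "card K = n - 2"
    and lm: "length m = Mm" "length m' = Mm"
    and eqK: "(\<lambda>j\<in>K. node_content G alpha m j) = (\<lambda>j\<in>K. node_content G alpha m' j)"
  shows "m = m'"
proof (cases "n < 2")
  case True
  then have "Mm = 0" unfolding Mm_def by (cases n) auto
  then show ?thesis using lm by simp
next
  case False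
  have "card ({1..n} - K) = 2" using K False by (simp add: card_Diff_subset finite_subset)
  then obtain i j where ij: "{1..n} - K = {i,j}" "i \<noteq> j" by (meson card_2_iff)
  define d where "d \<beta> p = xv m \<beta> p - xv m' \<beta> p" for \<beta> p
  have bs: "\<forall>\<beta>\<in>B. (\<Sum>p\<in>\<beta>. d \<beta> p) = 0"
    unfolding d_def by (simp add: sum_subtractf block_sum)
  have gs: "(\<Sum>\<beta>\<in>B. \<Sum>p\<in>\<beta>. c \<beta> p * d \<beta> p) = 0"
    unfolding d_def by (simp add: right_diff_distrib sum_subtractf global_sum)
  have z: "\<forall>\<beta>\<in>B. \<forall>p\<in>\<beta>. p \<notin> {i,j} \<longrightarrow> d \<beta> p = 0"
  proof (intro ballI impI)
    fix \<beta> p assume b: "\<beta> \<in> B" "p \<in> \<beta>" "p \<notin> {i,j}"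
    have pn: "p \<in> {1..n}" using b blk by blast
    then have pK: "p \<in> K" using ij b by blast
    have nc: "node_content G alpha m p = node_content G alpha m' p"
      using fun_cong[OF eqK, of p] pK by simp
    have "\<beta> \<in> en p ` {0..<alpha}" using en_bij[OF pn] b unfolding bij_betw_def Bp_def by auto
    then obtain t where t: "t < alpha" "\<beta> = en p t" by auto
    show "d \<beta> p = 0" unfolding d_def using content[OF t(1), of m p] content[OF t(1), of m' p] nc t by simp
  qed
  have allz: "\<forall>\<beta>\<in>B. \<forall>p\<in>\<beta>. d \<beta> p = 0" using zero_lemma[OF bs gs ij(2) z] .
  show ?thesis
  proof (rule nth_equalityI)
    show "length m = length m'" using lm by simp
  next
    fix l assume "l < length m"
    then have "l \<in> ix ` F" using ix_bij lm unfolding bij_betw_def by auto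
    then obtain q where q: "q \<in> F" "l = ix q" by auto
    have qS: "fst q \<in> B" "snd q \<in> fst q" "snd q \<noteq> Min (fst q)" using q unfolding F_def S_def by auto
    have "m ! l = yv m (fst q) (snd q)" using yv_F q lm by simp
    also have "\<dots> = xv m (fst q) (snd q)" using qS by (simp add: xv_eq)
    also have "\<dots> = xv m' (fst q) (snd q)" using allz qS unfolding d_def by auto
    also have "\<dots> = yv m' (fst q) (snd q)" using qS by (simp add: xv_eq)
    also have "\<dots> = m' ! l" using yv_F q lm by simp
    finally show "m ! l = m' ! l" .
  qed
qed


lemma data_collection:
  assumes K: "K \<subseteq> {1..n}" "card K = n - 2"
  shows "\<exists>dec :: (nat \<Rightarrow> 'a list) \<Rightarrow> 'a list.
           \<forall>m. length m = Mm \<longrightarrow> dec (\<lambda>j\<in>K. node_content G alpha m j) = m"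
proof (intro exI allI impI)
  fix m :: "'a list" assume lm: "length m = Mm"
  show "(\<lambda>f. SOME m. length m = Mm \<and> (\<lambda>j\<in>K. node_content G alpha m j) = f) (\<lambda>j\<in>K. node_content G alpha m j) = m"
  unfolding fun_app_def
  proof (rule some_equality)
    show "length m = Mm \<and> (\<lambda>j\<in>K. node_content G alpha m j) = (\<lambda>j\<in>K. node_content G alpha m j)" using lm by simp
  next
    fix m' assume "length m' = Mm \<and> (\<lambda>j\<in>K. node_content G alpha m' j) = (\<lambda>j\<in>K. node_content G alpha m j)"
    then show "m' = m" using inj_dc[OF K, of m' m] lm by simp
  qed
qed

end

lemma uncoded_imp:
  assumes u: "uncoded_repair (G :: nat \<Rightarrow> nat \<Rightarrow> nat \<Rightarrow> 'a::field) n \<alpha> M"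
  shows "\<forall>j\<in>{1..n}. \<forall>A. A \<subseteq> {1..n} - {j} \<and> card A = n - 1 \<longrightarrow>
        (\<exists>(S :: nat \<Rightarrow> nat \<Rightarrow> nat \<Rightarrow> 'a) (rec :: (nat \<Rightarrow> 'a list) \<Rightarrow> 'a list).
           \<forall>m. length m = M \<longrightarrow>
             rec (\<lambda>h\<in>A. map (\<lambda>t. \<Sum>i<\<alpha>. S h t i * node_content G \<alpha> m h ! i) [0..<1])
               = node_content G \<alpha> m j)"
proof (intro ballI allI impI)
  fix j A assume j: "j \<in> {1..n}" and A: "A \<subseteq> {1..n} - {j} \<and> card A = n - 1"
  have "card ({1..n} - {j}) = n - 1" using j by simp
  then have Aeq: "A = {1..n} - {j}" using A by (intro card_subset_eq) auto
  obtain s and rec :: "(nat \<Rightarrow> 'a) \<Rightarrow> 'a list" where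
    sr: "\<forall>h\<in>{1..n} - {j}. s h < \<alpha>"
      "\<forall>m. length m = M \<longrightarrow> rec (\<lambda>h\<in>{1..n} - {j}. node_content G \<alpha> m h ! s h) = node_content G \<alpha> m j"
    using u j unfolding uncoded_repair_def by blast
  show "\<exists>(S :: nat \<Rightarrow> nat \<Rightarrow> nat \<Rightarrow> 'a) (rec :: (nat \<Rightarrow> 'a list) \<Rightarrow> 'a list).
           \<forall>m. length m = M \<longrightarrow>
             rec (\<lambda>h\<in>A. map (\<lambda>t. \<Sum>i<\<alpha>. S h t i * node_content G \<alpha> m h ! i) [0..<1])
               = node_content G \<alpha> m j"
  proof (intro exI allI impI)
    fix m :: "'a list" assume lm: "length m = M"
    have "(\<lambda>h\<in>{1..n} - {j}. hd ((\<lambda>h\<in>A. map (\<lambda>t. \<Sum>i<\<alpha>. (\<lambda>h t i. if i = s h then 1 else 0) h t i * node_content G \<alpha> m h ! i) [0..<1]) h))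
        = (\<lambda>h\<in>{1..n} - {j}. node_content G \<alpha> m h ! s h)"
    proof (rule restrict_ext)
      fix h assume h: "h \<in> {1..n} - {j}"
      then have hA: "h \<in> A" using Aeq by simp
      have "(\<Sum>i<\<alpha>. (\<lambda>h t i. if i = s h then 1 else 0) h 0 i * node_content G \<alpha> m h ! i)
          = (\<Sum>i<\<alpha>. if i = s h then node_content G \<alpha> m h ! i else 0)"
        by (rule sum.cong) auto
      also have "\<dots> = node_content G \<alpha> m h ! s h" using sr(1) h by (simp add: sum.delta)
      finally show "hd ((\<lambda>h\<in>A. map (\<lambda>t. \<Sum>i<\<alpha>. (\<lambda>h t i. if i = s h then 1 else 0) h t i * node_content G \<alpha> m h ! i) [0..<1]) h)
          = node_content G \<alpha> m h ! s h" using hA by simp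
    qed
    then show "(\<lambda>g. rec (\<lambda>h\<in>{1..n} - {j}. hd (g h))) (\<lambda>h\<in>A. map (\<lambda>t. \<Sum>i<\<alpha>. (\<lambda>h t i. if i = s h then 1 else 0) h t i * node_content G \<alpha> m h ! i) [0..<1])
          = node_content G \<alpha> m j"
      using sr(2) lm by simp
  qed
qed

context stc2 begin
lemma final: "regenerating_code G n (n - 2) (n - 1) ((n - 1) div (r - 1)) 1 (n * (n - 1) div r - 1)
         \<and> uncoded_repair G n ((n - 1) div (r - 1)) (n * (n - 1) div r - 1)"
proof -
  have u: "uncoded_repair G n ((n - 1) div (r - 1)) (n * (n - 1) div r - 1)"
    using uncoded unfolding alpha_def Mm_def .
  moreover have "\<forall>K. K \<subseteq> {1..n} \<and> card K = n - 2 \<longrightarrow>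
        (\<exists>dec :: (nat \<Rightarrow> 'a list) \<Rightarrow> 'a list.
           \<forall>m. length m = n * (n - 1) div r - 1 \<longrightarrow> dec (\<lambda>j\<in>K. node_content G ((n - 1) div (r - 1)) m j) = m)"
    using data_collection unfolding alpha_def Mm_def by blast
  ultimately show ?thesis unfolding regenerating_code_def using uncoded_imp[OF u] by blast
qed
end

theorem mainTheorem2:
  fixes n r :: nat
  assumes "r \<ge> 2"
    and "card (UNIV :: 'a::{field,finite} set) \<ge> r"
    and "\<exists>B. steiner_system_2 r n B"
  shows "\<exists>G :: nat \<Rightarrow> nat \<Rightarrow> nat \<Rightarrow> 'a::{field,finite}.
           regenerating_code G n (n - 2) (n - 1) ((n - 1) div (r - 1)) 1 (n * (n - 1) div r - 1)
         \<and> uncoded_repair G n ((n - 1) div (r - 1)) (n * (n - 1) div r - 1)"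
proof -
  obtain B where B: "steiner_system_2 r n B" using assms(3) by blast
  obtain u :: "nat \<Rightarrow> 'a" where u: "bij_betw u {0..<card (UNIV :: 'a set)} UNIV"
    using ex_bij_betw_nat_finite[OF finite_UNIV] by blast
  define e where "e t = u t - u 0" for t
  have "inj_on u {0..<r}"
    using u assms(2) unfolding bij_betw_def by (auto intro: inj_on_subset)
  then have ei: "inj_on e {0..<r}" unfolding e_def inj_on_def by simp
  interpret stc2 r n B e
    by unfold_locales (use assms(1) B ei e_def in auto)
  show ?thesis using final by blast
qed

end
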